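(* Let $\mathfrak{D}\subset(\mathbb{C}\setminus\{0\})^{12}$, with coordinates $(w,w',w'',x,x',x'',y,y',y'',z,z',z'')$, be the variety defined by the equations $1=t(1-t'')$, $1=t'(1-t)$, $1=t''(1-t')$ for each $t\in\{w,x,y,z\}$, together with $1=wxyz$, $1=w'x'y'z'(w'')^2(x'')^2$ and $1=w'x'y'z'(y'')^2(z'')^2$. Let $\overline{\mathfrak{C}}\subset(\mathbb{C}\setminus\{0\})^2\times\mathbb{C}$, with coordinates $(\bar s,\bar u,d)$, be the hypersurface defined by $$0=\bar s\bar u(\bar s-1)(\bar u-1)+d\,(1-\bar s-\bar u+4\bar s\bar u-\bar s^2\bar u-\bar s\bar u^2+\bar s^2\bar u^2)+d^2(2-\bar s-\bar u+2\bar s\bar u)+d^3 .$$ Then there is a birational isomorphism $\mathfrak{D}\to\overline{\mathfrak{C}}$.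
   Context: $\mathfrak{D}$ is the deformation variety of the standard four-tetrahedron ideal triangulation of the complement $W$ of the right-handed Whitehead link. The fundamental group $\pi_1(W)$ is generated by two meridians $\mathcal{M}_0,\mathcal{M}_1$ subject to the single relation $\mathcal{M}_1\mathcal{M}_0\mathcal{M}_1\mathcal{M}_0^{-1}\mathcal{M}_1^{-1}\mathcal{M}_0^{-1}\mathcal{M}_1\mathcal{M}_0=\mathcal{M}_0\mathcal{M}_1\mathcal{M}_0^{-1}\mathcal{M}_1^{-1}\mathcal{M}_0^{-1}\mathcal{M}_1\mathcal{M}_0\mathcal{M}_1$, and $\overline{\mathfrak{C}}$ is exactly the set of parameters for which $\mathcal{M}_0\mapsto\begin{pmatrix}\bar s& d\\0&1\end{pmatrix}$, $\mathcal{M}_1\mapsto\begin{pmatrix}\bar u&0\\1&1\end{pmatrix}$ defines a representation of $\pi_1(W)$ into $GL_2(\mathbb{C})$ (equivalently, into the group of projective transformations of $\mathbb{C}P^1$). *)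

theory Defs
  imports Complex_Main
begin

(* Points of C^n are represented as complex lists of length n. *)

inductive poly_fun :: "nat \<Rightarrow> (complex list \<Rightarrow> complex) \<Rightarrow> bool" for n where
  pf_const: "poly_fun n (\<lambda>v. c)"
| pf_var: "i < n \<Longrightarrow> poly_fun n (\<lambda>v. v ! i)"
| pf_add: "poly_fun n p \<Longrightarrow> poly_fun n q \<Longrightarrow> poly_fun n (\<lambda>v. p v + q v)"
| pf_mult: "poly_fun n p \<Longrightarrow> poly_fun n q \<Longrightarrow> poly_fun n (\<lambda>v. p v * q v)"

definition zariski_open_in :: "nat \<Rightarrow> complex list set \<Rightarrow> complex list set \<Rightarrow> bool" where
  "zariski_open_in n X U \<longleftrightarrow>
     (\<exists>hs. (\<forall>h\<in>set hs. poly_fun n h) \<and> U = {v\<in>X. \<exists>h\<in>set hs. h v \<noteq> 0})"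

definition zariski_dense_in :: "nat \<Rightarrow> complex list set \<Rightarrow> complex list set \<Rightarrow> bool" where
  "zariski_dense_in n X U \<longleftrightarrow>
     U \<subseteq> X \<and> (\<forall>h. poly_fun n h \<longrightarrow> (\<forall>v\<in>U. h v = 0) \<longrightarrow> (\<forall>v\<in>X. h v = 0))"

definition rat_map :: "nat \<Rightarrow> nat \<Rightarrow> ((complex list \<Rightarrow> complex) \<times> (complex list \<Rightarrow> complex)) list \<Rightarrow> bool" where
  "rat_map n m F \<longleftrightarrow> length F = m \<and> (\<forall>(p,q)\<in>set F. poly_fun n p \<and> poly_fun n q)"

definition rat_eval :: "((complex list \<Rightarrow> complex) \<times> (complex list \<Rightarrow> complex)) list \<Rightarrow> complex list \<Rightarrow> complex list" where
  "rat_eval F v = map (\<lambda>(p,q). p v / q v) F"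

definition defined_on :: "((complex list \<Rightarrow> complex) \<times> (complex list \<Rightarrow> complex)) list \<Rightarrow> complex list set \<Rightarrow> bool" where
  "defined_on F U \<longleftrightarrow> (\<forall>v\<in>U. \<forall>(p,q)\<in>set F. q v \<noteq> 0)"

definition birational_iso :: "nat \<Rightarrow> complex list set \<Rightarrow> nat \<Rightarrow> complex list set \<Rightarrow> bool" where
  "birational_iso n X m Y \<longleftrightarrow>
     (\<exists>F G U V. rat_map n m F \<and> rat_map m n G \<and>
        zariski_open_in n X U \<and> zariski_dense_in n X U \<and>
        zariski_open_in m Y V \<and> zariski_dense_in m Y V \<and>
        defined_on F U \<and> defined_on G V \<and>
        (\<forall>v\<in>U. rat_eval F v \<in> V \<and> rat_eval G (rat_eval F v) = v) \<and>
        (\<forall>v\<in>V. rat_eval G v \<in> U \<and> rat_eval F (rat_eval G v) = v))"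

definition shape_eqs :: "complex \<Rightarrow> complex \<Rightarrow> complex \<Rightarrow> bool" where
  "shape_eqs t t' t'' \<longleftrightarrow> 1 = t * (1 - t'') \<and> 1 = t' * (1 - t) \<and> 1 = t'' * (1 - t')"

definition deformation_variety :: "complex list set" where
  "deformation_variety = {v. length v = 12 \<and> (\<forall>i<12. v ! i \<noteq> 0) \<and>
     (let w = v!0; w' = v!1; w'' = v!2; x = v!3; x' = v!4; x'' = v!5;
          y = v!6; y' = v!7; y'' = v!8; z = v!9; z' = v!10; z'' = v!11 in
       shape_eqs w w' w'' \<and> shape_eqs x x' x'' \<and> shape_eqs y y' y'' \<and> shape_eqs z z' z'' \<and>
       1 = w * x * y * z \<and>
       1 = w' * x' * y' * z' * w''^2 * x''^2 \<and>
       1 = w' * x' * y' * z' * y''^2 * z''^2)}"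

definition C_bar :: "complex list set" where
  "C_bar = {v. length v = 3 \<and> v!0 \<noteq> 0 \<and> v!1 \<noteq> 0 \<and>
     (let s = v!0; u = v!1; d = v!2 in
       0 = s * u * (s - 1) * (u - 1)
           + d * (1 - s - u + 4*s*u - s^2*u - s*u^2 + s^2*u^2)
           + d^2 * (2 - s - u + 2*s*u) + d^3)}"

end

theory Submission
  imports Defs "HOL-Analysis.Complex_Transcendental"
begin

lemma pf_diff: "poly_fun n p \<Longrightarrow> poly_fun n q \<Longrightarrow> poly_fun n (\<lambda>v. p v - q v)"
proof -
  assume "poly_fun n p" "poly_fun n q"
  then have "poly_fun n (\<lambda>v. p v + (\<lambda>v. -1) v * q v)" by (intro pf_add pf_mult pf_const)
  then show ?thesis by simp
qed

lemma poly_fun_cont: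
  assumes "poly_fun n h" "\<forall>i<n. isCont (\<lambda>e::complex. \<phi> e ! i) 0"
  shows "isCont (\<lambda>e. h (\<phi> e)) 0"
  using assms by (induction rule: poly_fun.induct) (auto intro!: continuous_intros)

lemma dense_by_paths:
  assumes UX: "U \<subseteq> X"
  and P: "\<And>p. p \<in> X \<Longrightarrow> p \<notin> U \<Longrightarrow> \<exists>\<phi>. \<phi> 0 = p \<and> (\<forall>i<n. isCont (\<lambda>e::complex. \<phi> e ! i) 0)
            \<and> (\<forall>\<^sub>F e in at 0. \<phi> e \<in> U)"
  shows "zariski_dense_in n X U"
  unfolding zariski_dense_in_def
proof (intro conjI allI impI ballI)
  show "U \<subseteq> X" by fact
  fix h p assume h: "poly_fun n h" and hU: "\<forall>v\<in>U. h v = 0" and p: "p \<in> X"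
  show "h p = 0"
  proof (cases "p \<in> U")
    case True then show ?thesis using hU by blast
  next
    case False
    then obtain \<phi> where ph: "\<phi> 0 = p" "\<forall>i<n. isCont (\<lambda>e::complex. \<phi> e ! i) 0"
       "\<forall>\<^sub>F e in at 0. \<phi> e \<in> U" using P p by blast
    have c: "isCont (\<lambda>e. h (\<phi> e)) 0" using poly_fun_cont[OF h ph(2)] .
    then have t1: "((\<lambda>e. h (\<phi> e)) \<longlongrightarrow> h p) (at 0)" using ph(1) by (simp add: isCont_def)
    have ev: "\<forall>\<^sub>F e in at 0. h (\<phi> e) = 0" using ph(3) by eventually_elim (use hU in blast)
    have t2: "((\<lambda>e. h (\<phi> e)) \<longlongrightarrow> 0) (at 0)"
      by (rule tendsto_eventually) (use ev in simp)
    show ?thesis using tendsto_unique[OF at_neq_bot t1 t2] .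
  qed
qed

lemma quad_alg:
  fixes a r q R :: complex
  assumes "R^2 = r^2 - 4*a*q" "r + R \<noteq> 0"
  shows "a * (-2*q/(r+R))^2 + r * (-2*q/(r+R)) + q = 0"
proof -
  define Y where "Y = -2*q/(r+R)"
  have Y: "Y * (r+R) = -2*q" unfolding Y_def using assms(2) by simp
  have "(r+R)^2 * (a * Y^2 + r * Y + q) = 0"
  proof -
    have "(r+R)^2 * (a * Y^2 + r * Y + q) = a * (Y*(r+R))^2 + r*(r+R)*(Y*(r+R)) + q*(r+R)^2"
      by (simp add: algebra_simps power2_eq_square)
    also have "\<dots> = q * (4*a*q - r^2 + R^2)" unfolding Y by (simp add: algebra_simps power2_eq_square)
    also have "\<dots> = 0" using assms(1) by simp
    finally show ?thesis .
  qed
  then show ?thesis using assms(2) unfolding Y_def by simp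
qed

lemma quad_root_path:
  fixes a b c :: "complex \<Rightarrow> complex"
  assumes ca: "isCont a 0" and cb: "isCont b 0" and cc: "isCont c 0"
    and root: "a 0 * x0^2 + b 0 * x0 + c 0 = 0" and simple: "2 * a 0 * x0 + b 0 \<noteq> 0"
  shows "\<exists>X. isCont X 0 \<and> X 0 = x0 \<and> (\<forall>\<^sub>F e in at 0. a e * (X e)^2 + b e * X e + c e = 0)"
proof -
  define r0 where "r0 = 2 * a 0 * x0 + b 0"
  define r where "r e = 2 * a e * x0 + b e" for e
  define q where "q e = a e * x0^2 + b e * x0 + c e" for e
  define R where "R e = r0 * csqrt ((r e ^ 2 - 4 * a e * q e) / r0 ^ 2)" for e
  define X where "X e = x0 + (- 2 * q e / (r e + R e))" for e
  have r0: "r0 \<noteq> 0" using simple r0_def by simp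
  have q0: "q 0 = 0" using root q_def by simp
  have r00: "r 0 = r0" by (simp add: r_def r0_def)
  have one: "(r 0 ^ 2 - 4 * a 0 * q 0) / r0 ^ 2 = 1" using r0 q0 r00 by simp
  have cr: "isCont r 0" unfolding r_def[abs_def] using ca cb by (intro continuous_intros)
  have cq: "isCont q 0" unfolding q_def[abs_def] using ca cb cc by (intro continuous_intros)
  have cR: "isCont R 0" unfolding R_def[abs_def]
    by (intro continuous_intros isCont_csqrt' cr ca cq) (use one in \<open>auto simp: complex_nonpos_Reals_iff\<close>)
  have R0: "R 0 = r0" unfolding R_def using one by simp
  have den0: "r 0 + R 0 \<noteq> 0" using r00 R0 r0 by simp
  have cX: "isCont X 0" unfolding X_def[abs_def]
    by (intro continuous_intros cq cr cR den0)
  have X0: "X 0 = x0" by (simp add: X_def q0)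
  have "((\<lambda>e. r e + R e) \<longlongrightarrow> r 0 + R 0) (at 0)"
    using cr cR by (intro tendsto_intros) (auto simp: isCont_def)
  then have ev: "\<forall>\<^sub>F e in at 0. r e + R e \<noteq> 0"
    using den0 tendsto_imp_eventually_ne by blast
  have "\<forall>\<^sub>F e in at 0. a e * (X e)^2 + b e * X e + c e = 0"
    using ev
  proof eventually_elim
    case (elim e)
    have RR: "R e ^ 2 = r e ^ 2 - 4 * a e * q e"
      unfolding R_def using r0 by (simp add: power_mult_distrib)
    have gen: "\<And>Y. a e*(x0+Y)^2 + b e*(x0+Y) + c e = a e*Y^2 + r e*Y + q e"
      unfolding r_def q_def by (simp add: algebra_simps power2_eq_square)
    have "a e * (X e)^2 + b e * X e + c e
       = a e * (-2*q e/(r e+R e))^2 + r e * (-2*q e/(r e+R e)) + q e"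
      unfolding X_def by (rule gen)
    also have "\<dots> = 0" by (rule quad_alg[OF RR elim])
    finally show ?case .
  qed
  then show ?thesis using cX X0 by blast
qed


lemma shape_iff: "shape_eqs t t1 t2 \<longleftrightarrow> t \<noteq> 0 \<and> t \<noteq> 1 \<and> t1 = 1/(1-t) \<and> t2 = (t-1)/t"
proof
  assume h: "shape_eqs t t1 t2"
  then have a: "1 = t * (1 - t2)" "1 = t1 * (1 - t)" unfolding shape_eqs_def by auto
  have t0: "t \<noteq> 0" using a(1) by auto
  have t1': "t \<noteq> 1" using a(2) by auto
  have "t1 = 1/(1-t)" using a(2) t1' by (simp add: field_simps)
  moreover have "t2 = (t-1)/t" using a(1) t0 by (simp add: field_simps)
  ultimately show "t \<noteq> 0 \<and> t \<noteq> 1 \<and> t1 = 1/(1-t) \<and> t2 = (t-1)/t" using t0 t1' by simp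
next
  assume h: "t \<noteq> 0 \<and> t \<noteq> 1 \<and> t1 = 1/(1-t) \<and> t2 = (t-1)/t"
  then have "1 - t \<noteq> 0" by simp
  with h show "shape_eqs t t1 t2" unfolding shape_eqs_def by (auto simp: field_simps)
qed

lemma all_less_12: "(\<forall>i<(12::nat). P i) \<longleftrightarrow> P 0 \<and> P 1 \<and> P 2 \<and> P 3 \<and> P 4 \<and> P 5 \<and> P 6 \<and> P 7 \<and> P 8 \<and> P 9 \<and> P 10 \<and> P 11"
  by (simp add: All_less_Suc numeral_eq_Suc) (auto simp: numeral_eq_Suc)

lemma len12: "length v = 12 \<Longrightarrow> \<exists>a0 a1 a2 a3 a4 a5 a6 a7 a8 a9 a10 a11. v = [a0,a1,a2,a3,a4,a5,a6,a7,a8,a9,a10,a11]"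
  by (simp add: numeral_eq_Suc length_Suc_conv) blast

lemma len3: "length v = 3 \<Longrightarrow> \<exists>a0 a1 a2. v = [a0,a1,a2]"
  by (simp add: numeral_eq_Suc length_Suc_conv) blast

lemma D_explicit: "[w,w1,w2,x,x1,x2,y,y1,y2,z,z1,z2] \<in> deformation_variety \<longleftrightarrow>
   w \<noteq> 0 \<and> w1 \<noteq> 0 \<and> w2 \<noteq> 0 \<and> x \<noteq> 0 \<and> x1 \<noteq> 0 \<and> x2 \<noteq> 0 \<and> y \<noteq> 0 \<and> y1 \<noteq> 0 \<and> y2 \<noteq> 0 \<and>
   z \<noteq> 0 \<and> z1 \<noteq> 0 \<and> z2 \<noteq> 0 \<and>
   shape_eqs w w1 w2 \<and> shape_eqs x x1 x2 \<and> shape_eqs y y1 y2 \<and> shape_eqs z z1 z2 \<and>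
   1 = w * x * y * z \<and> 1 = w1 * x1 * y1 * z1 * w2^2 * x2^2 \<and> 1 = w1 * x1 * y1 * z1 * y2^2 * z2^2"
  unfolding deformation_variety_def all_less_12 by (simp add: Let_def)

lemma C_explicit: "[s,u,d] \<in> C_bar \<longleftrightarrow> s \<noteq> 0 \<and> u \<noteq> 0 \<and>
     0 = s * u * (s - 1) * (u - 1)
           + d * (1 - s - u + 4 * s * u - s^2 * u - s * u^2 + s^2 * u^2)
           + d^2 * (2 - s - u + 2 * s * u) + d^3"
  unfolding C_bar_def by (simp add: Let_def)


definition mkD :: "complex \<Rightarrow> complex \<Rightarrow> complex \<Rightarrow> complex list" where
  "mkD w x y = [w, 1/(1-w), (w-1)/w, x, 1/(1-x), (x-1)/x, y, 1/(1-y), (y-1)/y,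
     1/(w*x*y), 1/(1-1/(w*x*y)), (1/(w*x*y)-1)/(1/(w*x*y))]"

definition EqD :: "complex \<Rightarrow> complex \<Rightarrow> complex \<Rightarrow> complex" where
  "EqD w x y = w^2*y*(y-1)*x^2 + (w-y)*x + y*(1-w)"

lemma eq2_key:
  fixes w x y z :: complex
  assumes nz: "w \<noteq> 0" "x \<noteq> 0" "y \<noteq> 0" "w \<noteq> 1" "x \<noteq> 1" "y \<noteq> 1" and z: "z * (w*x*y) = 1"
  shows "w^2*x^2*(1-y)*(1-z) = (1-w)*(1-x) \<longleftrightarrow> EqD w x y = 0"
proof -
  have "y * (w^2*x^2*(1-y)*(1-z) - (1-w)*(1-x)) = - EqD w x y"
  proof -
    have "y * (w^2*x^2*(1-y)*(1-z) - (1-w)*(1-x)) = y*w^2*x^2*(1-y) - w*x*(1-y)*(z*(w*x*y)) - y*(1-w)*(1-x)"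
      by (simp add: algebra_simps power2_eq_square)
    also have "\<dots> = - EqD w x y" unfolding z EqD_def by (simp add: algebra_simps power2_eq_square)
    finally show ?thesis .
  qed
  then show ?thesis using nz by (metis add.inverse_neutral eq_iff_diff_eq_0 mult_eq_0_iff neg_0_equal_iff_equal)
qed

lemma eq2_prod:
  fixes w x y z :: complex
  assumes nz: "w \<noteq> 0" "x \<noteq> 0" "y \<noteq> 0" "z \<noteq> 0" "w \<noteq> 1" "x \<noteq> 1" "y \<noteq> 1" "z \<noteq> 1"
  shows "1 = 1/(1-w) * (1/(1-x)) * (1/(1-y)) * (1/(1-z)) * ((w-1)/w)^2 * ((x-1)/x)^2
     \<longleftrightarrow> w^2*x^2*(1-y)*(1-z) = (1-w)*(1-x)"
proof -
  have a: "1-w \<noteq> 0" "1-x \<noteq> 0" "1-y \<noteq> 0" "1-z \<noteq> 0" using nz by auto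
  have f: "1/(1-t) * ((t-1)/t)^2 = (1-t)/t^2" if "t \<noteq> 0" "1 - t \<noteq> 0" for t :: complex
  proof -
    have "(t-1)^2 = (1-t)^2" by (simp add: power2_eq_square algebra_simps)
    then have "1/(1-t) * ((t-1)/t)^2 = (1-t)^2/((1-t)*t^2)" by (simp add: power_divide)
    also have "\<dots> = (1-t)/t^2" using that by (simp add: power2_eq_square)
    finally show ?thesis .
  qed
  have "1/(1-w) * (1/(1-x)) * (1/(1-y)) * (1/(1-z)) * ((w-1)/w)^2 * ((x-1)/x)^2
      = (1/(1-w) * ((w-1)/w)^2) * (1/(1-x) * ((x-1)/x)^2) * (1/(1-y)) * (1/(1-z))"
    by (simp add: algebra_simps)
  also have "\<dots> = ((1-w)/w^2) * ((1-x)/x^2) * (1/(1-y)) * (1/(1-z))"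
    using f a nz by simp
  also have "\<dots> = ((1-w)*(1-x)) / (w^2*x^2*(1-y)*(1-z))" by simp
  finally have P: "1/(1-w) * (1/(1-x)) * (1/(1-y)) * (1/(1-z)) * ((w-1)/w)^2 * ((x-1)/x)^2
      = ((1-w)*(1-x)) / (w^2*x^2*(1-y)*(1-z))" .
  have "w^2*x^2*(1-y)*(1-z) \<noteq> 0" using a nz by simp
  then show ?thesis unfolding P by (auto simp: eq_divide_eq)
qed

lemma mkD_in:
  fixes w x y :: complex
  assumes nz: "w \<noteq> 0" "x \<noteq> 0" "y \<noteq> 0" "w \<noteq> 1" "x \<noteq> 1" "y \<noteq> 1" "w*x*y \<noteq> 1"
    and E: "EqD w x y = 0"
  shows "mkD w x y \<in> deformation_variety"
proof -
  define z where "z = 1/(w*x*y)"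
  have z0: "z \<noteq> 0" using nz by (simp add: z_def)
  have z1: "z \<noteq> 1" using nz by (simp add: z_def field_simps)
  have zz: "z * (w*x*y) = 1" using nz by (simp add: z_def)
  have k: "w^2*x^2*(1-y)*(1-z) = (1-w)*(1-x)" using eq2_key[OF nz(1-6) zz] E by simp
  have e2: "1 = 1/(1-w) * (1/(1-x)) * (1/(1-y)) * (1/(1-z)) * ((w-1)/w)^2 * ((x-1)/x)^2"
    using eq2_prod[OF nz(1-3) z0 nz(4-6) z1] k by simp
  have k2: "y^2*z^2*(1-w)*(1-x) = (1-y)*(1-z)"
  proof -
    have "y^2*z^2*(1-w)*(1-x) = y^2*z^2*(w^2*x^2*(1-y)*(1-z))" using k by simp
    also have "\<dots> = (z*(w*x*y))^2*((1-y)*(1-z))" by (simp add: algebra_simps power2_eq_square)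
    also have "\<dots> = (1-y)*(1-z)" using zz by simp
    finally show ?thesis .
  qed
  have e3: "1 = 1/(1-w) * (1/(1-x)) * (1/(1-y)) * (1/(1-z)) * ((y-1)/y)^2 * ((z-1)/z)^2"
  proof -
    have e: "1 = 1/(1-y) * (1/(1-z)) * (1/(1-w)) * (1/(1-x)) * ((y-1)/y)^2 * ((z-1)/z)^2"
      using eq2_prod[OF nz(3) z0 nz(1,2) nz(6) z1 nz(4,5)] k2 by simp
    then show ?thesis by (simp add: algebra_simps)
  qed
  have sh: "shape_eqs t (1/(1-t)) ((t-1)/t)" if "t \<noteq> 0" "t \<noteq> 1" for t using that shape_iff by simp
  show ?thesis
    unfolding mkD_def z_def[symmetric] D_explicit
    using nz z0 z1 sh e2 e3 zz by (simp add: algebra_simps)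
qed

lemma D_mkD:
  assumes v: "v \<in> deformation_variety"
  shows "v = mkD (v!0) (v!3) (v!6) \<and> v!0 \<noteq> 0 \<and> v!3 \<noteq> 0 \<and> v!6 \<noteq> 0 \<and> v!0 \<noteq> 1 \<and> v!3 \<noteq> 1 \<and> v!6 \<noteq> 1
     \<and> v!0 * v!3 * v!6 \<noteq> 1 \<and> EqD (v!0) (v!3) (v!6) = 0 \<and> v!9 = 1/(v!0 * v!3 * v!6)"
proof -
  have "length v = 12" using v by (simp add: deformation_variety_def)
  then have v12: "v = [v!0,v!1,v!2,v!3,v!4,v!5,v!6,v!7,v!8,v!9,v!10,v!11]"
    by (simp add: list_eq_iff_nth_eq all_less_12)
  obtain w w1 w2 x x1 x2 y y1 y2 z z1 z2 where vv: "v = [w,w1,w2,x,x1,x2,y,y1,y2,z,z1,z2]"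
    by (rule that[OF v12])
  have h: "w \<noteq> 0 \<and> w1 \<noteq> 0 \<and> w2 \<noteq> 0 \<and> x \<noteq> 0 \<and> x1 \<noteq> 0 \<and> x2 \<noteq> 0 \<and> y \<noteq> 0 \<and> y1 \<noteq> 0 \<and> y2 \<noteq> 0 \<and>
   z \<noteq> 0 \<and> z1 \<noteq> 0 \<and> z2 \<noteq> 0 \<and>
   shape_eqs w w1 w2 \<and> shape_eqs x x1 x2 \<and> shape_eqs y y1 y2 \<and> shape_eqs z z1 z2 \<and>
   1 = w * x * y * z \<and> 1 = w1 * x1 * y1 * z1 * w2^2 * x2^2 \<and> 1 = w1 * x1 * y1 * z1 * y2^2 * z2^2"
    using v unfolding vv D_explicit .
  then have s: "w \<noteq> 0" "w \<noteq> 1" "w1 = 1/(1-w)" "w2 = (w-1)/w"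
    "x \<noteq> 0" "x \<noteq> 1" "x1 = 1/(1-x)" "x2 = (x-1)/x"
    "y \<noteq> 0" "y \<noteq> 1" "y1 = 1/(1-y)" "y2 = (y-1)/y"
    "z \<noteq> 0" "z \<noteq> 1" "z1 = 1/(1-z)" "z2 = (z-1)/z"
    unfolding shape_iff by auto
  have zz: "z * (w*x*y) = 1" using h by (simp add: algebra_simps)
  have zdef: "z = 1/(w*x*y)" using zz s(1,5,9) by (simp add: field_simps)
  have wxy: "w*x*y \<noteq> 1" using zz s(14) by auto
  have e2: "1 = 1/(1-w) * (1/(1-x)) * (1/(1-y)) * (1/(1-z)) * ((w-1)/w)^2 * ((x-1)/x)^2"
    using h s by simp
  have k: "w^2*x^2*(1-y)*(1-z) = (1-w)*(1-x)"
    using eq2_prod[OF s(1) s(5) s(9) s(13) s(2) s(6) s(10) s(14)] e2 by simp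
  have E: "EqD w x y = 0" using eq2_key[OF s(1) s(5) s(9) s(2) s(6) s(10) zz] k by simp
  show ?thesis unfolding vv mkD_def using s zdef wxy E by simp
qed


definition Fp :: "complex \<Rightarrow> complex \<Rightarrow> complex \<Rightarrow> complex" where
  "Fp s u d = s * u * (s - 1) * (u - 1)
           + d * (1 - s - u + 4 * s * u - s^2 * u - s * u^2 + s^2 * u^2)
           + d^2 * (2 - s - u + 2 * s * u) + d^3"

lemma C_Fp: "[s,u,d] \<in> C_bar \<longleftrightarrow> s \<noteq> 0 \<and> u \<noteq> 0 \<and> Fp s u d = 0"
  unfolding C_explicit Fp_def by auto

lemma Fp_A: "Fp s u (u*(1-s)) = u*(1+u)*(1-s)" unfolding Fp_def by algebra
lemma Fp_B: "Fp s u (s-1) = s^2*u*(1+u)*(s-1)" unfolding Fp_def by algebra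
lemma Fp_C: "Fp s u (-(1-s)*(1-u)) = -s*u*(1-u)*(1-s)" unfolding Fp_def by algebra
lemma Fp_d0: "Fp s u 0 = s*u*(s-1)*(u-1)" unfolding Fp_def by simp
lemma Fp_s1: "Fp 1 u d = d*(d^2 + (1+u)*d + 2*u)" unfolding Fp_def by (simp add: algebra_simps power2_eq_square power3_eq_cube)
lemma Fp_x1: "Fp s u (-s*u) = -(s^2*u^2)" unfolding Fp_def by algebra
lemma Fp_y1: "Fp s u (s-s*u-1) = -(s*u^2)" unfolding Fp_def by algebra

lemma V_conds:
  assumes C: "[s,u,d] \<in> C_bar" and g: "(s-1)*d*(d-s+1) \<noteq> 0"
  shows "s \<noteq> 0" "u \<noteq> 0" "s \<noteq> 1" "d \<noteq> 0" "d - s + 1 \<noteq> 0" "d+1-s \<noteq> 0"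
    "d - u*(1-s) \<noteq> 0" "d + (1-s)*(1-u) \<noteq> 0" "d + s*u \<noteq> 0" "s-s*u-1-d \<noteq> 0"
proof -
  have F: "Fp s u d = 0" and s0: "s \<noteq> 0" and u0: "u \<noteq> 0" using C C_Fp by auto
  show "s \<noteq> 0" "u \<noteq> 0" by fact+
  show s1: "s \<noteq> 1" and d0: "d \<noteq> 0" and dd: "d - s + 1 \<noteq> 0" using g by auto
  show "d+1-s \<noteq> 0" using dd by (simp add: algebra_simps)
  show "d - u*(1-s) \<noteq> 0"
  proof
    assume "d - u*(1-s) = 0"
    then have dA: "d = u*(1-s)" by simp
    have "u*(1+u)*(1-s) = 0" using F Fp_A[of s u] dA by simp
    then have "u = -1" using u0 s1 by (simp add: add_eq_0_iff)
    then show False using dA dd by simp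
  qed
  show "d + (1-s)*(1-u) \<noteq> 0"
  proof
    assume "d + (1-s)*(1-u) = 0"
    then have dA: "d = -(1-s)*(1-u)" by (simp add: algebra_simps add_eq_0_iff)
    have "-s*u*(1-u)*(1-s) = 0" using F Fp_C[of s u] dA by simp
    then have "u = 1" using u0 s1 s0 by simp
    then show False using dA d0 by simp
  qed
  show "d + s*u \<noteq> 0"
  proof
    assume "d + s*u = 0"
    then have dA: "d = -s*u" by (simp add: algebra_simps add_eq_0_iff)
    show False using F Fp_x1[of s u] dA s0 u0 by simp
  qed
  show "s-s*u-1-d \<noteq> 0"
  proof
    assume "s-s*u-1-d = 0"
    then have dA: "d = s-s*u-1" by (simp add: algebra_simps)
    show False using F Fp_y1[of s u] dA s0 u0 by simp
  qed
qed


definition Gm :: "((complex list \<Rightarrow> complex) \<times> (complex list \<Rightarrow> complex)) list" where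
  "Gm = [(\<lambda>v. v!2, \<lambda>v. v!2 - v!1*(1-v!0)),
         (\<lambda>v. v!2 - v!1*(1-v!0), \<lambda>v. -(v!1*(1-v!0))),
         (\<lambda>v. v!1*(1-v!0), \<lambda>v. v!2),
         (\<lambda>v. v!0*(v!2 - v!1*(1-v!0)), \<lambda>v. v!2),
         (\<lambda>v. v!2, \<lambda>v. (1-v!0)*(v!2+v!0* v!1)),
         (\<lambda>v. -((1-v!0)*(v!2+v!0* v!1)), \<lambda>v. v!0*(v!2 - v!1*(1-v!0))),
         (\<lambda>v. v!2+1-v!0, \<lambda>v. v!0*(v!2+(1-v!0)*(1-v!1))),
         (\<lambda>v. v!0*(v!2+(1-v!0)*(1-v!1)), \<lambda>v. (1-v!0)*(v!0-v!0* v!1-1-v!2)),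
         (\<lambda>v. -((1-v!0)*(v!0-v!0* v!1-1-v!2)), \<lambda>v. v!2+1-v!0),
         (\<lambda>v. v!2+(1-v!0)*(1-v!1), \<lambda>v. v!2+1-v!0),
         (\<lambda>v. v!2+1-v!0, \<lambda>v. (1-v!0)* v!1),
         (\<lambda>v. -((1-v!0)* v!1), \<lambda>v. v!2+(1-v!0)*(1-v!1))]"

definition Fm :: "((complex list \<Rightarrow> complex) \<times> (complex list \<Rightarrow> complex)) list" where
  "Fm = [(\<lambda>v. v!0 * v!3, \<lambda>v. 1),
         (\<lambda>v. (v!0 - 1) * (1 - v!9), \<lambda>v. v!0 * v!9 - 1),
         (\<lambda>v. v!0 * (1 - v!9) * (1 - v!0 * v!3), \<lambda>v. v!0 * v!9 - 1)]"

lemma Gm_eval: "rat_eval Gm [s,u,d] =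
  [d/(d-u*(1-s)), (d-u*(1-s))/(-(u*(1-s))), u*(1-s)/d,
   s*(d-u*(1-s))/d, d/((1-s)*(d+s* u)), -((1-s)*(d+s* u))/(s*(d-u*(1-s))),
   (d+1-s)/(s*(d+(1-s)*(1-u))), s*(d+(1-s)*(1-u))/((1-s)*(s-s* u-1-d)), -((1-s)*(s-s* u-1-d))/(d+1-s),
   (d+(1-s)*(1-u))/(d+1-s), (d+1-s)/((1-s)* u), -((1-s)* u)/(d+(1-s)*(1-u))]"
  by (simp add: rat_eval_def Gm_def)

lemma Gm_mkD:
  assumes nz: "s \<noteq> 0" "u \<noteq> 0" "s \<noteq> 1" "d \<noteq> 0" "d+1-s \<noteq> 0"
    "d - u*(1-s) \<noteq> 0" "d + (1-s)*(1-u) \<noteq> 0" "d + s* u \<noteq> 0" "s-s* u-1-d \<noteq> 0"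
  shows "rat_eval Gm [s,u,d] = mkD (d/(d-u*(1-s))) (s*(d-u*(1-s))/d) ((d+1-s)/(s*(d+(1-s)*(1-u))))"
proof -
  define A where "A = d-u*(1-s)"
  define B where "B = d+1-s"
  define C where "C = d+(1-s)*(1-u)"
  have A: "A \<noteq> 0" and B: "B \<noteq> 0" and C: "C \<noteq> 0" using nz by (auto simp: A_def B_def C_def)
  have s1: "1 - s \<noteq> 0" using nz by simp
  have W1: "1 - d/A = -(u*(1-s))/A" using A by (simp add: A_def field_simps)
  have e2: "1/(1 - d/A) = A/(-(u*(1-s)))" unfolding W1 using A nz s1 by simp
  have e3: "(d/A - 1)/(d/A) = u * (1-s)/d"
  proof -
    have "d/A - 1 = -(1 - d/A)" by simp
    also have "\<dots> = u * (1-s)/A" unfolding W1 by simp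
    finally have h: "d/A - 1 = u * (1-s)/A" .
    have "(u * (1-s)/A)/(d/A) = u * (1-s)/d" using A by simp
    then show ?thesis unfolding h .
  qed
  have X1: "1 - s* A/d = (1-s)*(d+s* u)/d" using nz by (simp add: A_def field_simps)
  have e5: "1/(1 - s* A/d) = d/((1-s)*(d+s* u))" unfolding X1 using nz by simp
  have e6: "(s* A/d - 1)/(s* A/d) = -((1-s)*(d+s* u))/(s* A)"
  proof -
    have "s* A/d - 1 = -(1 - s* A/d)" by simp
    also have "\<dots> = (-((1-s)*(d+s* u)))/d" unfolding X1 by simp
    finally have h: "s* A/d - 1 = (-((1-s)*(d+s* u)))/d" .
    have "((-((1-s)*(d+s* u)))/d)/(s* A/d) = -((1-s)*(d+s* u))/(s* A)" using nz by simp
    then show ?thesis unfolding h .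
  qed
  have Y1a: "s* C - B = (1-s)*(s-s* u-1-d)" unfolding B_def C_def by (simp add: algebra_simps)
  have Y1b: "1 - B/(s* C) = (s* C - B)/(s* C)" using nz C by (simp add: field_simps)
  have Y1: "1 - B/(s* C) = (1-s)*(s-s* u-1-d)/(s* C)" unfolding Y1b Y1a ..
  have e8: "1/(1 - B/(s* C)) = s* C/((1-s)*(s-s* u-1-d))" unfolding Y1 using nz C s1 by simp
  have e9: "(B/(s* C) - 1)/(B/(s* C)) = -((1-s)*(s-s* u-1-d))/B"
  proof -
    have "B/(s* C) - 1 = -(1 - B/(s* C))" by simp
    also have "\<dots> = (-((1-s)*(s-s* u-1-d)))/(s* C)" unfolding Y1 by simp
    finally have h: "B/(s* C) - 1 = (-((1-s)*(s-s* u-1-d)))/(s* C)" .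
    have "((-((1-s)*(s-s* u-1-d)))/(s* C))/(B/(s* C)) = -((1-s)*(s-s* u-1-d))/B" using nz C by simp
    then show ?thesis unfolding h .
  qed
  have P: "d/A * (s* A/d) * (B/(s* C)) = B/C" using nz A B C by (simp add: field_simps)
  have e10: "1/(B/C) = C/B" by simp
  have Z1a: "B - C = (1-s)* u" unfolding B_def C_def by (simp add: algebra_simps)
  have Z1b: "1 - C/B = (B - C)/B" using B by (simp add: field_simps)
  have Z1: "1 - C/B = (1-s)* u/B" unfolding Z1b Z1a ..
  have e11: "1/(1 - C/B) = B/((1-s)* u)" unfolding Z1 using B nz s1 by simp
  have e12: "(C/B - 1)/(C/B) = -((1-s)* u)/C"
  proof -
    have "C/B - 1 = -(1 - C/B)" by simp
    also have "\<dots> = (-((1-s)* u))/B" unfolding Z1 by simp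
    finally have h: "C/B - 1 = (-((1-s)* u))/B" .
    have "((-((1-s)* u))/B)/(C/B) = -((1-s)* u)/C" using B by simp
    then show ?thesis unfolding h .
  qed
  show ?thesis unfolding Gm_eval mkD_def A_def[symmetric] B_def[symmetric] C_def[symmetric] P
    e2 e3 e5 e6 e8 e9 e10 e11 e12 by simp
qed


definition gD :: "complex list \<Rightarrow> complex" where "gD v = v!0 * v!3 - 1"
definition gC :: "complex list \<Rightarrow> complex" where "gC v = (v!0 - 1) * v!2 * (v!2 - v!0 + 1)"
definition UU where "UU = {v \<in> deformation_variety. gD v \<noteq> 0}"
definition VV where "VV = {v \<in> C_bar. gC v \<noteq> 0}"

lemma wz_lemma:
  fixes w x y :: complex
  assumes "x \<noteq> 0" "w \<noteq> 1" "x \<noteq> 1" "EqD w x y = 0" "x * y = 1"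
  shows "w * x = 1"
proof -
  have "x * EqD w x y = (1-w)*(1-x)*(1-w* x)" using assms(5) unfolding EqD_def by algebra
  then have "(1-w)*(1-x)*(1-w* x) = 0" using assms(4) by simp
  then show ?thesis using assms(2,3) by simp
qed

definition Phi :: "complex \<Rightarrow> complex \<Rightarrow> complex \<Rightarrow> complex \<Rightarrow> complex" where
  "Phi s K U D = s* U*(s-1)*(U-K)* K + D*(K^2 - s* K^2 - U* K + 4* s* U* K - s^2* U* K - s* U^2 + s^2* U^2)
     + D^2*(2* K - s* K - U + 2* s* U) + D^3"

lemma Fp_Phi: "Fp s u d * K^3 = Phi s K (u* K) (d* K)"
  unfolding Fp_def Phi_def by algebra

lemma Phi_R: "Phi (w* x) (w* z-1) ((w-1)*(1-z)) (w*(1-z)*(1-w* x))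
   = ((1-w)*(1-x)* z - w* x*(w* x* z-1)*(1-z)) * (w*(1-z)*(1-w)*(1-w* x))"
  unfolding Phi_def by algebra

lemma EqD_alg:
  fixes A B C d s :: complex
  assumes "A \<noteq> 0" "C \<noteq> 0" "d \<noteq> 0" "s \<noteq> 0"
  shows "EqD (d/A) (s* A/d) (B/(s* C)) * (s* C^2* d* A) = s* d* A* B*(B-s* C) + s^2* C^2* d* A - s* A^2* B* C + B* C* d*(A-d)"
  using assms unfolding EqD_def by (simp add: field_simps power2_eq_square)

lemma N_F: "s* d*(d-u*(1-s))*(d+1-s)*((d+1-s)-s*(d+(1-s)*(1-u))) + s^2*(d+(1-s)*(1-u))^2* d*(d-u*(1-s))
   - s*(d-u*(1-s))^2*(d+1-s)*(d+(1-s)*(1-u)) + (d+1-s)*(d+(1-s)*(1-u))* d*((d-u*(1-s))-d)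
   = -u*(1-s)^3 * Fp s u d"
  unfolding Fp_def by algebra


lemma div_K: "K \<noteq> 0 \<Longrightarrow> (a::complex)/b = (a*K)/(b*K)" by simp

lemma V_to_U:
  assumes CC: "[s,u,d] \<in> C_bar" and g: "(s-1)*d*(d-s+1) \<noteq> 0"
  shows "rat_eval Gm [s,u,d] \<in> UU" "rat_eval Fm (rat_eval Gm [s,u,d]) = [s,u,d]"
proof -
  note c = V_conds[OF CC g]
  have F0: "Fp s u d = 0" using CC C_Fp by auto
  define A where "A = d-u*(1-s)"
  define B where "B = d+1-s"
  define C where "C = d+(1-s)*(1-u)"
  define W where "W = d/A"
  define X where "X = s*A/d"
  define Y where "Y = B/(s*C)"
  have A: "A \<noteq> 0" and B: "B \<noteq> 0" and C: "C \<noteq> 0" using c by (auto simp: A_def B_def C_def)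
  have s1: "1 - s \<noteq> 0" using c by simp
  have G: "rat_eval Gm [s,u,d] = mkD W X Y"
    unfolding W_def X_def Y_def A_def B_def C_def using Gm_mkD[OF c(1,2,3,4,6,7,8,9,10)] .
  have WX: "W*X = s" unfolding W_def X_def using A c by simp
  have WXY: "W*X*Y = B/C" unfolding WX Y_def using c by simp
  have W0: "W \<noteq> 0" unfolding W_def using A c by simp
  have W1: "W \<noteq> 1" unfolding W_def using A c by (simp add: A_def)
  have X0: "X \<noteq> 0" unfolding X_def using A c by simp
  have X1: "X \<noteq> 1"
  proof
    assume "X = 1"
    then have "s*A = d" unfolding X_def using c by (simp add: field_simps)
    then have "(1-s)*(d+s*u) = 0" unfolding A_def by (simp add: algebra_simps)
    then show False using s1 c by simp
  qed
  have Y0: "Y \<noteq> 0" unfolding Y_def using B C c by simp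
  have Y1: "Y \<noteq> 1"
  proof
    assume "Y = 1"
    then have "B = s*C" unfolding Y_def using C c by (simp add: field_simps)
    then have "(1-s)*(s-s*u-1-d) = 0" unfolding B_def C_def by (simp add: algebra_simps)
    then show False using s1 c by simp
  qed
  have WXY1: "W*X*Y \<noteq> 1"
  proof
    assume "W*X*Y = 1"
    then have "B = C" unfolding WXY using C by (simp add: field_simps)
    then have "(1-s)*u = 0" unfolding B_def C_def by (simp add: algebra_simps)
    then show False using s1 c by simp
  qed
  have E: "EqD W X Y = 0"
  proof -
    have "EqD W X Y * (s*C^2*d*A) = -u*(1-s)^3 * Fp s u d"
      unfolding W_def X_def Y_def EqD_alg[OF A C c(4) c(1)] unfolding A_def B_def C_def N_F ..
    then have "EqD W X Y * (s*C^2*d*A) = 0" using F0 by simp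
    then show ?thesis using A C c by simp
  qed
  have inD: "mkD W X Y \<in> deformation_variety" by (rule mkD_in[OF W0 X0 Y0 W1 X1 Y1 WXY1 E])
  show "rat_eval Gm [s,u,d] \<in> UU" unfolding G UU_def gD_def using inD WX c
    by (simp add: mkD_def)
  have Fm_eval: "rat_eval Fm (mkD W X Y) = [W*X, (W-1)*(1-1/(W*X*Y))/(W*(1/(W*X*Y))-1),
        W*(1-1/(W*X*Y))*(1-W*X)/(W*(1/(W*X*Y))-1)]"
    by (simp add: rat_eval_def Fm_def mkD_def)
  have Z: "1/(W*X*Y) = C/B" unfolding WXY by simp
  have K: "W*(C/B) - 1 = u*(1-s)^2/(A*B)"
  proof -
    have "d*C - A*B = u*(1-s)^2" unfolding A_def B_def C_def by algebra
    then show ?thesis unfolding W_def using A B by (simp add: field_simps)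
  qed
  have Wm1: "W - 1 = u*(1-s)/A" unfolding W_def using A by (simp add: field_simps A_def)
  have Z1: "1 - C/B = (1-s)*u/B"
  proof -
    have "B - C = (1-s)*u" unfolding B_def C_def by (simp add: algebra_simps)
    then show ?thesis using B by (simp add: field_simps)
  qed
  have nzK: "u*(1-s)^2/(A*B) \<noteq> 0" using A B c s1 by simp
  have num1: "(u*(1-s)/A)*((1-s)*u/B) = u * (u*(1-s)^2/(A*B))"
    using A B by (simp add: field_simps power2_eq_square)
  have num2: "(d/A)*((1-s)*u/B)*(1-s) = d * (u*(1-s)^2/(A*B))"
    using A B by (simp add: field_simps power2_eq_square)
  have u_eq: "(W-1)*(1-C/B)/(W*(C/B)-1) = u"
    unfolding K Wm1 Z1 num1 using nzK by simp
  have d_eq: "W*(1-C/B)*(1-W*X)/(W*(C/B)-1) = d"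
  proof -
    have "W*(1-C/B)*(1-W*X) = W*((1-s)*u/B)*(1-s)" unfolding Z1 WX ..
    also have "\<dots> = (d/A)*((1-s)*u/B)*(1-s)" by (simp add: W_def)
    finally have "W*(1-C/B)*(1-W*X) = (d/A)*((1-s)*u/B)*(1-s)" .
    then show ?thesis unfolding K num2 using nzK by simp
  qed
  show "rat_eval Fm (rat_eval Gm [s,u,d]) = [s,u,d]"
    unfolding G Fm_eval unfolding Z unfolding u_eq d_eq by (simp add: WX)
qed


lemma U_to_V:
  assumes v: "v \<in> deformation_variety" and g: "v!0 * v!3 - 1 \<noteq> 0"
  shows "rat_eval Fm v \<in> VV" "rat_eval Gm (rat_eval Fm v) = v" "v!0 * v!9 - 1 \<noteq> 0"
proof -
  define w where "w = v!0"
  define x where "x = v!3"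
  define y where "y = v!6"
  define z where "z = v!9"
  have DD: "v = mkD w x y" "w \<noteq> 0" "x \<noteq> 0" "y \<noteq> 0" "w \<noteq> 1" "x \<noteq> 1" "y \<noteq> 1"
     "w*x*y \<noteq> 1" "EqD w x y = 0" "z = 1/(w*x*y)"
    using D_mkD[OF v] unfolding w_def x_def y_def z_def by auto
  have wx: "w*x \<noteq> 1" using g unfolding w_def x_def by simp
  have zz: "z*(w*x*y) = 1" using DD by simp
  have z0: "z \<noteq> 0" using zz by auto
  have z1: "z \<noteq> 1" using zz DD(8) by auto
  have wz: "w*z - 1 \<noteq> 0"
  proof
    assume "w*z - 1 = 0"
    then have "w*z = 1" by simp
    then have "x*y = 1" using zz by (metis mult.assoc mult.commute mult.left_neutral)
    then have "w*x = 1" using wz_lemma[OF DD(3) DD(5) DD(6) DD(9)] by simp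
    then show False using wx by simp
  qed
  show "v!0 * v!9 - 1 \<noteq> 0" using wz unfolding w_def z_def .
  define K where "K = w*z - 1"
  have K: "K \<noteq> 0" using wz K_def by simp
  define s where "s = w*x"
  define u where "u = (w-1)*(1-z)/K"
  define d where "d = w*(1-z)*(1-w*x)/K"
  have Fm_eval: "rat_eval Fm v = [s,u,d]"
    by (simp add: rat_eval_def Fm_def w_def x_def z_def s_def u_def d_def K_def)
  have uK: "u*K = (w-1)*(1-z)" unfolding u_def using K by simp
  have dK: "d*K = w*(1-z)*(1-w*x)" unfolding d_def using K by simp
  have k: "w^2*x^2*(1-y)*(1-z) = (1-w)*(1-x)" using eq2_key[OF DD(2,3,4,5,6,7) zz] DD(9) by simp
  have R: "(1-w)*(1-x)*z - w*x*(w*x*z-1)*(1-z) = 0"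
  proof -
    have "(1-w)*(1-x)*z - w*x*(w*x*z-1)*(1-z) =
       z*((1-w)*(1-x) - w^2*x^2*(1-y)*(1-z)) + (1-z)*w*x*(1 - z*(w*x*y))" by algebra
    then show ?thesis using k zz by simp
  qed
  have "Fp s u d * K^3 = 0"
    unfolding Fp_Phi uK dK unfolding s_def K_def Phi_R using R by simp
  then have F0: "Fp s u d = 0" using K by simp
  have s0: "s \<noteq> 0" using DD unfolding s_def by simp
  have u0: "u \<noteq> 0" unfolding u_def using K DD z1 by simp
  have s1: "s - 1 \<noteq> 0" using wx unfolding s_def by simp
  have d0: "d \<noteq> 0" unfolding d_def using K DD z1 wx by simp
  have dK2: "(d - s + 1)*K = (1-w*x)*(w-1)" unfolding s_def K_def d_def using K[unfolded K_def]
    by (simp add: field_simps) (simp add: algebra_simps)?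
  have ds: "d - s + 1 \<noteq> 0" using dK2 wx DD(5) by auto
  have CC: "[s,u,d] \<in> C_bar" using C_Fp s0 u0 F0 by simp
  have gg: "(s-1)*d*(d-s+1) \<noteq> 0" using s1 d0 ds by simp
  show "rat_eval Fm v \<in> VV" unfolding Fm_eval VV_def gC_def using CC gg by simp
  note c = V_conds[OF CC gg]
  have A: "(d-u*(1-s))*K = (1-z)*(1-w*x)"
  proof -
    have "(d-u*(1-s))*K = d*K - (u*K)*(1-s)" by (simp add: algebra_simps)
    also have "\<dots> = (1-z)*(1-w*x)" unfolding dK uK s_def by (simp add: algebra_simps)
    finally show ?thesis .
  qed
  have B: "(d+1-s)*K = (1-w*x)*(w-1)" using dK2 by (simp add: algebra_simps)
  have C: "(d+(1-s)*(1-u))*K = (1-w*x)*z*(w-1)"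
  proof -
    have "(d+(1-s)*(1-u))*K = d*K + (1-s)*(K - u*K)" by (simp add: algebra_simps)
    also have "\<dots> = (1-w*x)*z*(w-1)" unfolding dK uK unfolding s_def K_def by (simp add: algebra_simps)
    finally show ?thesis .
  qed
  have Wf: "d/(d-u*(1-s)) = w"
  proof -
    have "d/(d-u*(1-s)) = (d*K)/((d-u*(1-s))*K)" using K by simp
    also have "\<dots> = w" unfolding dK A using wx z1 by simp
    finally show ?thesis .
  qed
  have Xf: "s*(d-u*(1-s))/d = x"
  proof -
    have "s*(d-u*(1-s))/d = s*((d-u*(1-s))*K)/(d*K)" using K by simp
    also have "\<dots> = x" unfolding dK A unfolding s_def using wx z1 DD(2) by simp
    finally show ?thesis .
  qed
  have Yf: "(d+1-s)/(s*(d+(1-s)*(1-u))) = y"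
  proof -
    have "(d+1-s)/(s*(d+(1-s)*(1-u))) = ((d+1-s)*K)/(s*((d+(1-s)*(1-u))*K))" using K by simp
    also have "\<dots> = 1/(s*z)" unfolding B C using wx DD by simp
    also have "\<dots> = y" unfolding s_def using zz DD z0 by (simp add: field_simps)
    finally show ?thesis .
  qed
  have "rat_eval Gm [s,u,d] = mkD w x y"
    using Gm_mkD[OF c(1,2,3,4,6,7,8,9,10)] unfolding Wf Xf Yf .
  then show "rat_eval Gm (rat_eval Fm v) = v" unfolding Fm_eval using DD(1) by simp
qed


lemma all_less_3: "(\<forall>i<(3::nat). P i) \<longleftrightarrow> P 0 \<and> P 1 \<and> P 2"
  by (simp add: All_less_Suc numeral_eq_Suc) (auto simp: numeral_eq_Suc)

lemma ev_ne: "\<forall>\<^sub>F e in at (0::complex). e \<noteq> c"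
  by (rule eventually_neq_at_within)

lemma ev_cont_ne:
  assumes "isCont f (0::complex)" "f 0 \<noteq> (c::complex)"
  shows "\<forall>\<^sub>F e in at 0. f e \<noteq> c"
proof -
  have "(f \<longlongrightarrow> f 0) (at 0)" using assms(1) by (simp add: isCont_def)
  then show ?thesis using assms(2) tendsto_imp_eventually_ne by blast
qed

lemma EqD_wx1:
  fixes w x y :: complex
  assumes "w*x = 1" "EqD w x y = 0"
  shows "y = w \<or> w*y = 1"
proof -
  have "w * EqD w x y = (w*y - 1)*(y - w)" using assms(1) unfolding EqD_def by algebra
  then have "(w*y - 1)*(y - w) = 0" using assms(2) by simp
  then show ?thesis by auto
qed

lemma dense_U: "zariski_dense_in 12 deformation_variety UU"
proof (rule dense_by_paths)
  show "UU \<subseteq> deformation_variety" unfolding UU_def by auto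
  fix p assume pD: "p \<in> deformation_variety" and pU: "p \<notin> UU"
  define w where "w = p!0"
  define x0 where "x0 = p!3"
  define y0 where "y0 = p!6"
  have DD: "p = mkD w x0 y0" "w \<noteq> 0" "x0 \<noteq> 0" "y0 \<noteq> 0" "w \<noteq> 1" "x0 \<noteq> 1" "y0 \<noteq> 1"
     "w*x0*y0 \<noteq> 1" "EqD w x0 y0 = 0"
    using D_mkD[OF pD] unfolding w_def x0_def y0_def by auto
  have wx: "w*x0 = 1" using pU pD unfolding UU_def gD_def w_def x0_def by simp
  have yy: "y0 = w \<or> w*y0 = 1" using EqD_wx1[OF wx DD(9)] .
  define a where "a e = w^2*(y0+e)*((y0+e)-1)" for e
  define b where "b e = w - (y0+e)" for e
  define c where "c e = (y0+e)*(1-w)" for e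
  have abc: "EqD w X (y0+e) = a e * X^2 + b e * X + c e" for X e
    unfolding EqD_def a_def b_def c_def by (simp add: algebra_simps)
  have root: "a 0 * x0^2 + b 0 * x0 + c 0 = 0" using DD(9) abc[of x0 0] by simp
  have simple: "2 * a 0 * x0 + b 0 \<noteq> 0"
  proof -
    have x0w: "x0 = 1/w" using wx DD(2) by (simp add: field_simps)
    have "2 * a 0 * x0 + b 0 = 2*w*y0*(y0-1) + w - y0"
      unfolding a_def b_def x0w using DD(2) by (simp add: power2_eq_square)
    moreover have "2*w*y0*(y0-1) + w - y0 \<noteq> 0"
      using yy
    proof
      assume "y0 = w"
      then have "2*w*y0*(y0-1) + w - y0 = 2*w^2*(w-1)" by (simp add: power2_eq_square)
      then show ?thesis using DD(2,5) by simp
    next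
      assume h: "w*y0 = 1"
      then have "w*(2*w*y0*(y0-1) + w - y0) = (w-1)^2"
        by algebra
      then show ?thesis using DD(5) by auto
    qed
    ultimately show ?thesis by simp
  qed
  have ca: "isCont a 0" unfolding a_def[abs_def] by (intro continuous_intros)
  have cb: "isCont b 0" unfolding b_def[abs_def] by (intro continuous_intros)
  have cc: "isCont c 0" unfolding c_def[abs_def] by (intro continuous_intros)
  obtain X where X: "isCont X 0" "X 0 = x0" "\<forall>\<^sub>F e in at 0. a e * (X e)^2 + b e * X e + c e = 0"
    using quad_root_path[OF ca cb cc root simple] by blast
  define \<phi> where "\<phi> e = mkD w (X e) (y0+e)" for e
  show "\<exists>\<phi>. \<phi> 0 = p \<and> (\<forall>i<12. isCont (\<lambda>e::complex. \<phi> e ! i) 0) \<and> (\<forall>\<^sub>F e in at 0. \<phi> e \<in> UU)"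
  proof (intro exI conjI)
    show "\<phi> 0 = p" unfolding \<phi>_def X(2) DD(1) by simp
    have cy: "isCont (\<lambda>e::complex. y0 + e) 0" by (intro continuous_intros)
    have n1: "1 - X 0 \<noteq> 0" "X 0 \<noteq> 0" "1 - (y0 + 0) \<noteq> 0" "y0 + 0 \<noteq> 0" "w * X 0 * (y0 + 0) \<noteq> 0"
        "1 - 1/(w * X 0 * (y0 + 0)) \<noteq> 0" "1/(w * X 0 * (y0 + 0)) \<noteq> 0" "1 - w \<noteq> 0"
      using DD X(2) by (auto simp: field_simps)
    show "\<forall>i<12. isCont (\<lambda>e::complex. \<phi> e ! i) 0"
      unfolding all_less_12 \<phi>_def mkD_def using X(1) n1
      by (simp del: add_0_right)
    have ev1: "\<forall>\<^sub>F e in at 0. X e \<noteq> 0" using ev_cont_ne[OF X(1)] X(2) DD(3) by simp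
    have ev2: "\<forall>\<^sub>F e in at 0. X e \<noteq> 1" using ev_cont_ne[OF X(1)] X(2) DD(6) by simp
    have ev3: "\<forall>\<^sub>F e in at 0. y0 + e \<noteq> 0" using ev_cont_ne[OF cy] DD(4) by simp
    have ev4: "\<forall>\<^sub>F e in at 0. y0 + e \<noteq> 1" using ev_cont_ne[OF cy] DD(7) by simp
    have cp: "isCont (\<lambda>e. w * X e * (y0 + e)) 0" using X(1) by (intro continuous_intros)
    have ev5: "\<forall>\<^sub>F e in at 0. w * X e * (y0 + e) \<noteq> 1" using ev_cont_ne[OF cp] X(2) DD(8) by simp
    have ev6: "\<forall>\<^sub>F e in at 0. e \<noteq> w - y0" by (rule ev_ne)
    have ev7: "\<forall>\<^sub>F e in at 0. e \<noteq> 1/w - y0" by (rule ev_ne)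
    show "\<forall>\<^sub>F e in at 0. \<phi> e \<in> UU"
      using X(3) ev1 ev2 ev3 ev4 ev5 ev6 ev7
    proof eventually_elim
      case (elim e)
      have E: "EqD w (X e) (y0+e) = 0" using elim(1) abc by simp
      have inD: "\<phi> e \<in> deformation_variety" unfolding \<phi>_def
        by (rule mkD_in) (use DD elim E in auto)
      have "w * X e \<noteq> 1"
      proof
        assume "w * X e = 1"
        then have "y0 + e = w \<or> w*(y0+e) = 1" using EqD_wx1 E by blast
        then show False using elim(7,8) DD(2) by (auto simp: field_simps)
      qed
      then show ?case using inD unfolding UU_def gD_def \<phi>_def mkD_def by simp
    qed
  qed
qed


definition Aq :: "complex \<Rightarrow> complex \<Rightarrow> complex" where "Aq s d = s*(s-1)*(1+d)"
definition Bq :: "complex \<Rightarrow> complex \<Rightarrow> complex" where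
  "Bq s d = -(s*(s-1)) + d*(4* s - 1 - s^2) + d^2*(2* s-1)"
definition Cq :: "complex \<Rightarrow> complex \<Rightarrow> complex" where
  "Cq s d = d*(1-s) + d^2*(2-s) + d^3"

lemma Fp_quad: "Fp s u d = Aq s d * u^2 + Bq s d * u + Cq s d"
  unfolding Fp_def Aq_def Bq_def Cq_def by algebra

lemma SV_s1: "2 * Aq 1 d * u + Bq 1 d = d*(d+2)"
  unfolding Aq_def Bq_def by (simp add: algebra_simps power2_eq_square)
lemma SV_d0: "2 * Aq s 0 * 1 + Bq s 0 = s*(s-1)"
  unfolding Aq_def Bq_def by (simp add: algebra_simps)
lemma SV_B: "2 * Aq s (s-1) * (-1) + Bq s (s-1) = -(s^2*(s-1))"
  unfolding Aq_def Bq_def by algebra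

definition A2 :: "complex \<Rightarrow> complex \<Rightarrow> complex" where "A2 c e = (1+e)*(1+e*(c+e))"
definition B2 :: "complex \<Rightarrow> complex \<Rightarrow> complex" where
  "B2 c e = -(1+e) + (c+e)*(2+2* e-e^2) + e*(c+e)^2*(2*(1+e)-1)"
definition C2 :: "complex \<Rightarrow> complex \<Rightarrow> complex" where
  "C2 c e = -(e*(c+e)) + e*(c+e)^2*(1-e) + e^2*(c+e)^3"

lemma Fp_quad2: "Fp (1+e) u (e*(c+e)) = e * (A2 c e * u^2 + B2 c e * u + C2 c e)"
  unfolding Fp_def A2_def B2_def C2_def by algebra

lemma VV_mem: "[s,u,d] \<in> VV \<longleftrightarrow> s \<noteq> 0 \<and> u \<noteq> 0 \<and> Fp s u d = 0 \<and> s - 1 \<noteq> 0 \<and> d \<noteq> 0 \<and> d - s + 1 \<noteq> 0"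
  unfolding VV_def gC_def by (auto simp: C_Fp)

lemma dense_V: "zariski_dense_in 3 C_bar VV"
proof (rule dense_by_paths)
  show "VV \<subseteq> C_bar" unfolding VV_def by auto
  fix p assume pC: "p \<in> C_bar" and pV: "p \<notin> VV"
  have "length p = 3" using pC by (simp add: C_bar_def)
  then have p3: "p = [p!0, p!1, p!2]" by (simp add: list_eq_iff_nth_eq all_less_3)
  define s0 where "s0 = p!0"
  define u0 where "u0 = p!1"
  define d0 where "d0 = p!2"
  have pp: "p = [s0,u0,d0]" using p3 unfolding s0_def u0_def d0_def .
  have CC: "s0 \<noteq> 0" "u0 \<noteq> 0" "Fp s0 u0 d0 = 0" using pC unfolding pp C_Fp by auto
  have "s0 - 1 = 0 \<or> d0 = 0 \<or> d0 - s0 + 1 = 0" using pV CC unfolding pp VV_mem by auto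
  then have gz: "s0 = 1 \<or> d0 = 0 \<or> d0 = s0 - 1" by (auto simp: algebra_simps)
  have cI: "isCont (\<lambda>e::complex. e) 0" by (intro continuous_intros)
  show "\<exists>\<phi>. \<phi> 0 = p \<and> (\<forall>i<3. isCont (\<lambda>e::complex. \<phi> e ! i) 0) \<and> (\<forall>\<^sub>F e in at 0. \<phi> e \<in> VV)"
  proof (cases "s0 = 1 \<and> d0 = 0")
    case False
    define a where "a e = Aq (s0+e) (d0+2* e)" for e
    define b where "b e = Bq (s0+e) (d0+2* e)" for e
    define c where "c e = Cq (s0+e) (d0+2* e)" for e
    have root: "a 0 * u0^2 + b 0 * u0 + c 0 = 0" using CC(3) unfolding a_def b_def c_def Fp_quad by simp
    have simple: "2 * a 0 * u0 + b 0 \<noteq> 0"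
    proof -
      have "2 * Aq s0 d0 * u0 + Bq s0 d0 \<noteq> 0"
      proof (cases "s0 = 1")
        case True
        then have d0: "d0 \<noteq> 0" using False by simp
        have "d0*(d0^2 + (1+u0)* d0 + 2* u0) = 0" using CC(3) Fp_s1 True by simp
        then have q: "d0^2 + (1+u0)* d0 + 2* u0 = 0" using d0 by simp
        have "d0 + 2 \<noteq> 0"
        proof
          assume "d0 + 2 = 0"
          then have "d0 = -2" by (simp add: eq_neg_iff_add_eq_0)
          then show False using q by (simp add: power2_eq_square algebra_simps)
        qed
        then show ?thesis using SV_s1[of d0 u0] True d0 by simp
      next
        case s1: False
        show ?thesis
        proof (cases "d0 = 0")
          case True
          then have "s0* u0*(s0-1)*(u0-1) = 0" using CC(3) Fp_d0 by simp
          then have "u0 = 1" using CC s1 by simp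
          then show ?thesis using SV_d0[of s0] True CC s1 by simp
        next
          case d0: False
          then have dd: "d0 = s0 - 1" using gz s1 by simp
          then have "s0^2* u0*(1+u0)*(s0-1) = 0" using CC(3) Fp_B by simp
          then have "1 + u0 = 0" using CC s1 by simp
          then have "u0 = -1" by (simp add: add_eq_0_iff)
          then show ?thesis using SV_B[of s0] dd CC s1 by simp
        qed
      qed
      then show ?thesis unfolding a_def b_def by simp
    qed
    have ca: "isCont a 0" unfolding a_def[abs_def] Aq_def by (intro continuous_intros)
    have cb: "isCont b 0" unfolding b_def[abs_def] Bq_def by (intro continuous_intros)
    have cc: "isCont c 0" unfolding c_def[abs_def] Cq_def by (intro continuous_intros)
    obtain U where U: "isCont U 0" "U 0 = u0" "\<forall>\<^sub>F e in at 0. a e * (U e)^2 + b e * U e + c e = 0"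
      using quad_root_path[OF ca cb cc root simple] by blast
    show ?thesis
    proof (intro exI conjI)
      show "(\<lambda>e. [s0+e, U e, d0+2* e]) 0 = p" using pp U(2) by simp
      show "\<forall>i<3. isCont (\<lambda>e::complex. [s0+e, U e, d0+2* e] ! i) 0"
        unfolding all_less_3 using U(1) by simp
      have cs: "isCont (\<lambda>e::complex. s0 + e) 0" by (intro continuous_intros)
      have ev1: "\<forall>\<^sub>F e in at 0. s0 + e \<noteq> 0" using ev_cont_ne[OF cs] CC(1) by simp
      have ev2: "\<forall>\<^sub>F e in at 0. U e \<noteq> 0" using ev_cont_ne[OF U(1)] U(2) CC(2) by simp
      have ev3: "\<forall>\<^sub>F e in at 0. e \<noteq> 1 - s0" by (rule ev_ne)
      have ev4: "\<forall>\<^sub>F e in at 0. e \<noteq> -d0/2" by (rule ev_ne)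
      have ev5: "\<forall>\<^sub>F e in at 0. e \<noteq> s0 - 1 - d0" by (rule ev_ne)
      show "\<forall>\<^sub>F e in at 0. [s0+e, U e, d0+2* e] \<in> VV"
        using U(3) ev1 ev2 ev3 ev4 ev5
      proof eventually_elim
        case (elim e)
        have F: "Fp (s0+e) (U e) (d0+2* e) = 0" using elim(1) unfolding Fp_quad a_def b_def c_def by simp
        have "s0 + e - 1 \<noteq> 0" using elim(4) by (auto simp: algebra_simps)
        moreover have "d0 + 2* e \<noteq> 0" using elim(5) by (auto simp: field_simps eq_neg_iff_add_eq_0 add.commute)
        moreover have "d0 + 2* e - (s0+e) + 1 \<noteq> 0" using elim(6) by (auto simp: algebra_simps)
        ultimately show ?case unfolding VV_mem using F elim(2,3) by simp
      qed
    qed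
  next
    case True
    then have s1: "s0 = 1" and d0: "d0 = 0" by auto
    define k where "k = (1 - u0)/2"
    define a where "a e = A2 k e" for e
    define b where "b e = B2 k e" for e
    define c where "c e = C2 k e" for e
    have a0: "a 0 = 1" unfolding a_def A2_def by simp
    have b0: "b 0 = -u0" unfolding b_def B2_def k_def by (simp add: field_simps)
    have c0: "c 0 = 0" unfolding c_def C2_def by simp
    have root: "a 0 * u0^2 + b 0 * u0 + c 0 = 0" unfolding a0 b0 c0 by (simp add: power2_eq_square)
    have simple: "2 * a 0 * u0 + b 0 \<noteq> 0" unfolding a0 b0 using CC(2) by simp
    have ca: "isCont a 0" unfolding a_def[abs_def] A2_def by (intro continuous_intros)
    have cb: "isCont b 0" unfolding b_def[abs_def] B2_def by (intro continuous_intros)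
    have cc: "isCont c 0" unfolding c_def[abs_def] C2_def by (intro continuous_intros)
    obtain U where U: "isCont U 0" "U 0 = u0" "\<forall>\<^sub>F e in at 0. a e * (U e)^2 + b e * U e + c e = 0"
      using quad_root_path[OF ca cb cc root simple] by blast
    show ?thesis
    proof (intro exI conjI)
      show "(\<lambda>e. [1+e, U e, e*(k+e)]) 0 = p" using pp U(2) s1 d0 by simp
      show "\<forall>i<3. isCont (\<lambda>e::complex. [1+e, U e, e*(k+e)] ! i) 0"
        unfolding all_less_3 using U(1) by simp
      have cs: "isCont (\<lambda>e::complex. 1 + e) 0" by (intro continuous_intros)
      have ev1: "\<forall>\<^sub>F e in at 0. 1 + (e::complex) \<noteq> 0" using ev_cont_ne[OF cs, of 0] by simp
      have ev2: "\<forall>\<^sub>F e in at 0. U e \<noteq> 0" using ev_cont_ne[OF U(1)] U(2) CC(2) by simp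
      have ev3: "\<forall>\<^sub>F e in at 0. (e::complex) \<noteq> 0" by (rule ev_ne)
      have ev4: "\<forall>\<^sub>F e in at 0. (e::complex) \<noteq> -k" by (rule ev_ne)
      have ev5: "\<forall>\<^sub>F e in at 0. (e::complex) \<noteq> 1 - k" by (rule ev_ne)
      show "\<forall>\<^sub>F e in at 0. [1+e, U e, e*(k+e)] \<in> VV"
        using U(3) ev1 ev2 ev3 ev4 ev5
      proof eventually_elim
        case (elim e)
        have F: "Fp (1+e) (U e) (e*(k+e)) = 0" using elim(1) unfolding Fp_quad2 a_def b_def c_def by simp
        have "k + e \<noteq> 0" using elim(5) by (auto simp: algebra_simps add_eq_0_iff)
        then have "e*(k+e) \<noteq> 0" using elim(4) by simp
        moreover have "e*(k+e) - (1+e) + 1 \<noteq> 0"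
        proof -
          have "e*(k+e) - (1+e) + 1 = e*(k+e-1)" by (simp add: algebra_simps)
          moreover have "k+e-1 \<noteq> 0" using elim(6) by (auto simp: algebra_simps)
          ultimately show ?thesis using elim(4) by simp
        qed
        ultimately show ?case unfolding VV_mem using F elim(2,3,4) by simp
      qed
    qed
  qed
qed


lemma pf_neg: "poly_fun n p \<Longrightarrow> poly_fun n (\<lambda>v. - p v)"
proof -
  assume "poly_fun n p"
  then have "poly_fun n (\<lambda>v. (\<lambda>v. -1) v * p v)" by (intro pf_mult pf_const)
  then show ?thesis by simp
qed

lemmas pf_rules = pf_add pf_mult pf_diff pf_neg pf_const pf_var

lemma rat_map_Fm: "rat_map 12 3 Fm"
  unfolding rat_map_def Fm_def by (simp; intro conjI pf_rules; simp)

lemma rat_map_Gm: "rat_map 3 12 Gm"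
  unfolding rat_map_def Gm_def by (simp; intro conjI pf_rules; simp)

lemma open_U: "zariski_open_in 12 deformation_variety UU"
  unfolding zariski_open_in_def
proof (intro exI conjI)
  show "\<forall>h\<in>set [gD]. poly_fun 12 h" unfolding gD_def by (simp; intro pf_rules; simp)
  show "UU = {v \<in> deformation_variety. \<exists>h\<in>set [gD]. h v \<noteq> 0}" unfolding UU_def by simp
qed

lemma open_V: "zariski_open_in 3 C_bar VV"
  unfolding zariski_open_in_def
proof (intro exI conjI)
  show "\<forall>h\<in>set [gC]. poly_fun 3 h" unfolding gC_def by (simp; intro pf_rules; simp)
  show "VV = {v \<in> C_bar. \<exists>h\<in>set [gC]. h v \<noteq> 0}" unfolding VV_def by simp
qed

lemma VV_elim:
  assumes "v \<in> VV"
  obtains s u d where "v = [s,u,d]" "[s,u,d] \<in> C_bar" "(s-1)*d*(d-s+1) \<noteq> 0"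
proof -
  have "length v = 3" using assms by (simp add: VV_def C_bar_def)
  then have p3: "v = [v!0, v!1, v!2]" by (simp add: list_eq_iff_nth_eq all_less_3)
  show ?thesis
  proof (rule that[OF p3])
    show "[v!0, v!1, v!2] \<in> C_bar" using assms p3 by (simp add: VV_def)
    show "(v!0-1)*(v!2)*(v!2-v!0+1) \<noteq> 0" using assms by (simp add: VV_def gC_def)
  qed
qed

lemma def_Fm: "defined_on Fm UU"
  unfolding defined_on_def
proof (intro ballI)
  fix v pq assume v: "v \<in> UU" and pq: "pq \<in> set Fm"
  have "v!0 * v!9 - 1 \<noteq> 0" using U_to_V(3) v by (simp add: UU_def gD_def)
  then show "case pq of (p, q) \<Rightarrow> q v \<noteq> 0" using pq by (auto simp: Fm_def)
qed

lemma def_Gm: "defined_on Gm VV"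
  unfolding defined_on_def
proof (intro ballI)
  fix v pq assume v: "v \<in> VV" and pq: "pq \<in> set Gm"
  obtain s u d where vv: "v = [s,u,d]" "[s,u,d] \<in> C_bar" "(s-1)*d*(d-s+1) \<noteq> 0"
    using VV_elim[OF v] by blast
  note c = V_conds[OF vv(2,3)]
  have s1: "1 - s \<noteq> 0" using c by simp
  show "case pq of (p, q) \<Rightarrow> q v \<noteq> 0" using pq c s1 unfolding vv(1) by (auto simp: Gm_def)
qed

theorem mainTheorem2:
  shows "birational_iso 12 deformation_variety 3 C_bar"
  unfolding birational_iso_def
proof (intro exI conjI)
  show "rat_map 12 3 Fm" by (rule rat_map_Fm)
  show "rat_map 3 12 Gm" by (rule rat_map_Gm)
  show "zariski_open_in 12 deformation_variety UU" by (rule open_U)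
  show "zariski_dense_in 12 deformation_variety UU" by (rule dense_U)
  show "zariski_open_in 3 C_bar VV" by (rule open_V)
  show "zariski_dense_in 3 C_bar VV" by (rule dense_V)
  show "defined_on Fm UU" by (rule def_Fm)
  show "defined_on Gm VV" by (rule def_Gm)
  show "\<forall>v\<in>UU. rat_eval Fm v \<in> VV \<and> rat_eval Gm (rat_eval Fm v) = v"
    using U_to_V(1,2) by (auto simp: UU_def gD_def)
  show "\<forall>v\<in>VV. rat_eval Gm v \<in> UU \<and> rat_eval Fm (rat_eval Gm v) = v"
  proof
    fix v assume v: "v \<in> VV"
    obtain s u d where vv: "v = [s,u,d]" "[s,u,d] \<in> C_bar" "(s-1)*d*(d-s+1) \<noteq> 0"
      using VV_elim[OF v] by blast
    show "rat_eval Gm v \<in> UU \<and> rat_eval Fm (rat_eval Gm v) = v"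
      unfolding vv(1) using V_to_U[OF vv(2,3)] by simp
  qed
qed

end
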